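(* Let $G$ be a two-player game with a finite set $\mathcal{P}$ of positions as in the context, let $\alpha$ be as defined there, and let $x$ be a Richman function for $G$. Let $T$ be the set defined from $x$ as in the context. Then $\alpha(P)=x(P)$ for all $P\in\mathcal{P}$ if and only if every position $P$ with $x(P)>0$ belongs to $T$.
   Context: The game is given by a finite set $\mathcal{P}$ of positions; each non-terminal position $P$ has a nonempty set of White options $P_w$ and a nonempty set of Black options $P_b$ (positions to which White, resp. Black, can move). Terminal positions are designated as White wins or Black wins. Define $\alpha_n:\mathcal{P}\to[0,1]$ by $\alpha_n(P)=1$ (resp. $0$) for all $n$ if $P$ is a terminal White (resp. Black) win, $\alpha_0(P)=0$ for non-terminal $P$, and $\alpha_{n+1}(P)=\frac12(\max_w\alpha_n(P_w)+\min_b\alpha_n(P_b))$ for non-terminal $P$; let $\alpha(P)=\lim_n\alpha_n(P)$ (the sequence is nondecreasing). A Richman function is a function $x:\mathcal{P}\to[0,1]$ with $x(P)=1$ at terminal White wins, $x(P)=0$ at terminal Black wins, and $x(P)=\frac12(\max_w x(P_w)+\min_b x(P_b))$ at every non-terminal $P$. A White move from $P$ to $P_w$ is $x$-greedy if $x(P_w)=\max_{w'}x(P_{w'})$. Let $T_0$ be the set of terminal positions, and for $n\ge0$ let $T_{n+1}$ consist of the positions that belong to $T_n$, or have an $x$-greedy White option in $T_n$, or have all of their Black options in $T_n$. Let $T=\bigcup_n T_n$. *)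

theory Defs
  imports Complex_Main
begin

text \<open>A game on a finite type of positions 'p is given by the set Term of terminal
positions, the set WWin of terminal White wins (terminal positions not in WWin are
Black wins), and the White/Black option maps Wo, Bo.\<close>

definition game :: "'p set \<Rightarrow> 'p set \<Rightarrow> ('p \<Rightarrow> 'p set) \<Rightarrow> ('p \<Rightarrow> 'p set) \<Rightarrow> bool" where
  "game Term WWin Wo Bo \<longleftrightarrow> WWin \<subseteq> Term \<and>
     (\<forall>P. P \<notin> Term \<longrightarrow> Wo P \<noteq> {} \<and> Bo P \<noteq> {})"

fun alpha_seq :: "'p set \<Rightarrow> 'p set \<Rightarrow> ('p \<Rightarrow> 'p set) \<Rightarrow> ('p \<Rightarrow> 'p set) \<Rightarrow> nat \<Rightarrow> 'p \<Rightarrow> real" where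
  "alpha_seq Term WWin Wo Bo 0 P =
     (if P \<in> Term then (if P \<in> WWin then 1 else 0) else 0)"
| "alpha_seq Term WWin Wo Bo (Suc n) P =
     (if P \<in> Term then (if P \<in> WWin then 1 else 0)
      else (Max (alpha_seq Term WWin Wo Bo n ` Wo P) + Min (alpha_seq Term WWin Wo Bo n ` Bo P)) / 2)"

definition alpha :: "'p set \<Rightarrow> 'p set \<Rightarrow> ('p \<Rightarrow> 'p set) \<Rightarrow> ('p \<Rightarrow> 'p set) \<Rightarrow> 'p \<Rightarrow> real" where
  "alpha Term WWin Wo Bo P = lim (\<lambda>n. alpha_seq Term WWin Wo Bo n P)"

definition richman :: "'p set \<Rightarrow> 'p set \<Rightarrow> ('p \<Rightarrow> 'p set) \<Rightarrow> ('p \<Rightarrow> 'p set) \<Rightarrow> ('p \<Rightarrow> real) \<Rightarrow> bool" where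
  "richman Term WWin Wo Bo x \<longleftrightarrow>
     (\<forall>P. 0 \<le> x P \<and> x P \<le> 1) \<and>
     (\<forall>P\<in>Term. x P = (if P \<in> WWin then 1 else 0)) \<and>
     (\<forall>P. P \<notin> Term \<longrightarrow> x P = (Max (x ` Wo P) + Min (x ` Bo P)) / 2)"

definition greedy_white :: "('p \<Rightarrow> 'p set) \<Rightarrow> ('p \<Rightarrow> real) \<Rightarrow> 'p \<Rightarrow> 'p \<Rightarrow> bool" where
  "greedy_white Wo x P Q \<longleftrightarrow> Q \<in> Wo P \<and> x Q = Max (x ` Wo P)"

fun Tseq :: "'p set \<Rightarrow> ('p \<Rightarrow> 'p set) \<Rightarrow> ('p \<Rightarrow> 'p set) \<Rightarrow> ('p \<Rightarrow> real) \<Rightarrow> nat \<Rightarrow> 'p set" where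
  "Tseq Term Wo Bo x 0 = Term"
| "Tseq Term Wo Bo x (Suc n) = Tseq Term Wo Bo x n \<union>
     {P. (\<exists>Q. greedy_white Wo x P Q \<and> Q \<in> Tseq Term Wo Bo x n) \<or> Bo P \<subseteq> Tseq Term Wo Bo x n}"

definition Tset :: "'p set \<Rightarrow> ('p \<Rightarrow> 'p set) \<Rightarrow> ('p \<Rightarrow> 'p set) \<Rightarrow> ('p \<Rightarrow> real) \<Rightarrow> 'p set" where
  "Tset Term Wo Bo x = (\<Union>n. Tseq Term Wo Bo x n)"

end

theory Submission
  imports Defs
begin

lemma Max_le_pt:
  fixes f g :: "'a \<Rightarrow> real"
  shows "finite A \<Longrightarrow> A \<noteq> {} \<Longrightarrow> (\<And>a. a\<in>A \<Longrightarrow> f a \<le> g a) \<Longrightarrow> Max (f ` A) \<le> Max (g ` A)"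
  by (auto simp: Max_le_iff intro: order_trans[OF _ Max_ge])

lemma Min_le_pt:
  fixes f g :: "'a \<Rightarrow> real"
  shows "finite A \<Longrightarrow> A \<noteq> {} \<Longrightarrow> (\<And>a. a\<in>A \<Longrightarrow> f a \<le> g a) \<Longrightarrow> Min (f ` A) \<le> Min (g ` A)"
  by (auto simp: Min_ge_iff intro: order_trans[OF Min_le])

lemma tendsto_Max_img:
  fixes f :: "nat \<Rightarrow> 'a \<Rightarrow> real"
  assumes "finite A" "A \<noteq> {}" "\<And>a. a \<in> A \<Longrightarrow> (\<lambda>n. f n a) \<longlonglongrightarrow> g a"
  shows "(\<lambda>n. Max (f n ` A)) \<longlonglongrightarrow> Max (g ` A)"
  using assms
proof (induction A rule: finite_ne_induct)
  case (singleton x) then show ?case by simp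
next
  case (insert x F) then show ?case by (auto intro!: tendsto_max)
qed

lemma tendsto_Min_img:
  fixes f :: "nat \<Rightarrow> 'a \<Rightarrow> real"
  assumes "finite A" "A \<noteq> {}" "\<And>a. a \<in> A \<Longrightarrow> (\<lambda>n. f n a) \<longlonglongrightarrow> g a"
  shows "(\<lambda>n. Min (f n ` A)) \<longlonglongrightarrow> Min (g ` A)"
  using assms
proof (induction A rule: finite_ne_induct)
  case (singleton x) then show ?case by simp
next
  case (insert x F) then show ?case by (auto intro!: tendsto_min)
qed

lemma alpha_super:
  fixes Term WWin :: "'p::finite set" and Wo Bo :: "'p \<Rightarrow> 'p set" and y :: "'p \<Rightarrow> real"
  assumes G: "game Term WWin Wo Bo"
    and yT: "\<And>P. P \<in> Term \<Longrightarrow> (if P \<in> WWin then 1 else 0) \<le> y P"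
    and y0: "\<And>P. P \<notin> Term \<Longrightarrow> 0 \<le> y P"
    and ys: "\<And>P. P \<notin> Term \<Longrightarrow> (Max (y ` Wo P) + Min (y ` Bo P)) / 2 \<le> y P"
  shows "alpha_seq Term WWin Wo Bo n P \<le> y P"
proof (induction n arbitrary: P)
  case 0 then show ?case using yT y0 by auto
next
  case (Suc n)
  show ?case
  proof (cases "P \<in> Term")
    case True then show ?thesis using yT by simp
  next
    case False
    have ne: "Wo P \<noteq> {}" "Bo P \<noteq> {}" using G False by (auto simp: game_def)
    have "Max (alpha_seq Term WWin Wo Bo n ` Wo P) \<le> Max (y ` Wo P)"
      by (rule Max_le_pt) (use ne Suc in auto)
    moreover have "Min (alpha_seq Term WWin Wo Bo n ` Bo P) \<le> Min (y ` Bo P)"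
      by (rule Min_le_pt) (use ne Suc in auto)
    ultimately show ?thesis using False ys[OF False] by simp
  qed
qed

lemma alpha_mono_step:
  fixes Term WWin :: "'p::finite set" and Wo Bo :: "'p \<Rightarrow> 'p set"
  assumes G: "game Term WWin Wo Bo"
  shows "alpha_seq Term WWin Wo Bo n P \<le> alpha_seq Term WWin Wo Bo (Suc n) P"
proof (induction n arbitrary: P)
  case 0
  have nn: "0 \<le> alpha_seq Term WWin Wo Bo m Q" for m Q
  proof (induction m arbitrary: Q)
    case (Suc m)
    show ?case
    proof (cases "Q \<in> Term")
      case False
      then have ne: "Wo Q \<noteq> {}" "Bo Q \<noteq> {}" using G by (auto simp: game_def)
      then obtain q where q: "q \<in> Wo Q" by blast
      have "0 \<le> Max (alpha_seq Term WWin Wo Bo m ` Wo Q)"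
        using q Suc.IH[of q] by (meson Max_ge finite finite_imageI imageI order_trans)
      moreover have "0 \<le> Min (alpha_seq Term WWin Wo Bo m ` Bo Q)"
        using ne Suc by (auto simp: Min_ge_iff)
      ultimately show ?thesis by simp
    qed simp
  qed simp
  show ?case
  proof (cases "P \<in> Term")
    case False
    then have "alpha_seq Term WWin Wo Bo 0 P = 0" by simp
    then show ?thesis using nn[of "Suc 0" P] by simp
  qed simp
next
  case (Suc n)
  show ?case
  proof (cases "P \<in> Term")
    case True then show ?thesis by simp
  next
    case False
    have ne: "Wo P \<noteq> {}" "Bo P \<noteq> {}" using G False by (auto simp: game_def)
    have "Max (alpha_seq Term WWin Wo Bo n ` Wo P) \<le> Max (alpha_seq Term WWin Wo Bo (Suc n) ` Wo P)"
      by (rule Max_le_pt) (use ne Suc in auto)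
    moreover have "Min (alpha_seq Term WWin Wo Bo n ` Bo P) \<le> Min (alpha_seq Term WWin Wo Bo (Suc n) ` Bo P)"
      by (rule Min_le_pt) (use ne Suc in auto)
    ultimately show ?thesis using False
      by (simp only: alpha_seq.simps if_False) simp
  qed
qed

lemma alpha_conv:
  fixes Term WWin :: "'p::finite set" and Wo Bo :: "'p \<Rightarrow> 'p set" and x :: "'p \<Rightarrow> real"
  assumes G: "game Term WWin Wo Bo" and R: "richman Term WWin Wo Bo x"
  shows "(\<lambda>n. alpha_seq Term WWin Wo Bo n P) \<longlonglongrightarrow> alpha Term WWin Wo Bo P"
    and "alpha_seq Term WWin Wo Bo n P \<le> alpha Term WWin Wo Bo P"
proof -
  have inc: "incseq (\<lambda>n. alpha_seq Term WWin Wo Bo n P)"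
    by (rule incseq_SucI) (rule alpha_mono_step[OF G])
  have bd: "\<forall>i. alpha_seq Term WWin Wo Bo i P \<le> x P"
    using R by (auto intro!: alpha_super[OF G] simp: richman_def)
  obtain L where L: "(\<lambda>n. alpha_seq Term WWin Wo Bo n P) \<longlonglongrightarrow> L"
    "\<forall>i. alpha_seq Term WWin Wo Bo i P \<le> L"
    using incseq_convergent[OF inc bd] by blast
  have "alpha Term WWin Wo Bo P = L" unfolding alpha_def using L(1) by (rule limI)
  then show "(\<lambda>n. alpha_seq Term WWin Wo Bo n P) \<longlonglongrightarrow> alpha Term WWin Wo Bo P"
    and "alpha_seq Term WWin Wo Bo n P \<le> alpha Term WWin Wo Bo P" using L by auto
qed

lemma alpha_le_super:
  fixes Term WWin :: "'p::finite set" and Wo Bo :: "'p \<Rightarrow> 'p set" and y x :: "'p \<Rightarrow> real"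
  assumes G: "game Term WWin Wo Bo" and R: "richman Term WWin Wo Bo x"
    and yT: "\<And>P. P \<in> Term \<Longrightarrow> (if P \<in> WWin then 1 else 0) \<le> y P"
    and y0: "\<And>P. P \<notin> Term \<Longrightarrow> 0 \<le> y P"
    and ys: "\<And>P. P \<notin> Term \<Longrightarrow> (Max (y ` Wo P) + Min (y ` Bo P)) / 2 \<le> y P"
  shows "alpha Term WWin Wo Bo P \<le> y P"
  using alpha_conv(1)[OF G R] alpha_super[OF G yT y0 ys]
  by (meson LIMSEQ_le_const2)

lemma alpha_rich:
  fixes Term WWin :: "'p::finite set" and Wo Bo :: "'p \<Rightarrow> 'p set" and x :: "'p \<Rightarrow> real"
  assumes G: "game Term WWin Wo Bo" and R: "richman Term WWin Wo Bo x" and P: "P \<notin> Term"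
  shows "alpha Term WWin Wo Bo P = (Max (alpha Term WWin Wo Bo ` Wo P) + Min (alpha Term WWin Wo Bo ` Bo P)) / 2"
proof -
  have ne: "Wo P \<noteq> {}" "Bo P \<noteq> {}" using G P by (auto simp: game_def)
  have "(\<lambda>n. alpha_seq Term WWin Wo Bo (Suc n) P) \<longlonglongrightarrow> alpha Term WWin Wo Bo P"
    using alpha_conv(1)[OF G R] by (rule LIMSEQ_Suc)
  moreover have "(\<lambda>n. alpha_seq Term WWin Wo Bo (Suc n) P) \<longlonglongrightarrow>
      (Max (alpha Term WWin Wo Bo ` Wo P) + Min (alpha Term WWin Wo Bo ` Bo P)) / 2"
    using P
    by (simp, intro tendsto_intros tendsto_Max_img tendsto_Min_img alpha_conv(1)[OF G R])
      (use ne in auto)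
  ultimately show ?thesis by (rule LIMSEQ_unique)
qed

lemma alpha_Term:
  fixes Term WWin :: "'p::finite set" and Wo Bo :: "'p \<Rightarrow> 'p set" and x :: "'p \<Rightarrow> real"
  assumes G: "game Term WWin Wo Bo" and R: "richman Term WWin Wo Bo x" and P: "P \<in> Term"
  shows "alpha Term WWin Wo Bo P = (if P \<in> WWin then 1 else 0)"
proof -
  have "alpha_seq Term WWin Wo Bo n P = (if P \<in> WWin then 1 else 0)" for n
    using P by (cases n) auto
  then have "(\<lambda>n. alpha_seq Term WWin Wo Bo n P) = (\<lambda>n. (if P \<in> WWin then 1 else 0))" by auto
  then have "(\<lambda>n. alpha_seq Term WWin Wo Bo n P) \<longlonglongrightarrow> (if P \<in> WWin then 1 else 0)" by simp
  then show ?thesis using alpha_conv(1)[OF G R] LIMSEQ_unique by blast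
qed

lemma Tseq_mono: "m \<le> n \<Longrightarrow> Tseq Term Wo Bo x m \<subseteq> Tseq Term Wo Bo x n"
  by (rule lift_Suc_mono_le[of "Tseq Term Wo Bo x"]) auto

lemma Tseq_fin_sub:
  assumes "finite A" "A \<subseteq> Tset Term Wo Bo x"
  shows "\<exists>n. A \<subseteq> Tseq Term Wo Bo x n"
  using assms
proof (induction A rule: finite_induct)
  case empty then show ?case by auto
next
  case (insert a A)
  then obtain n1 where n1: "A \<subseteq> Tseq Term Wo Bo x n1" by auto
  from insert obtain n2 where n2: "a \<in> Tseq Term Wo Bo x n2" by (auto simp: Tset_def)
  have "insert a A \<subseteq> Tseq Term Wo Bo x (max n1 n2)"
    using n1 n2 Tseq_mono[of n1 "max n1 n2" Term Wo Bo x] Tseq_mono[of n2 "max n1 n2" Term Wo Bo x] by auto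
  then show ?case by blast
qed

lemma dir_if:
  fixes Term WWin :: "'p::finite set" and Wo Bo :: "'p \<Rightarrow> 'p set" and x :: "'p \<Rightarrow> real"
  assumes G: "game Term WWin Wo Bo" and R: "richman Term WWin Wo Bo x"
    and H: "\<forall>P. x P > 0 \<longrightarrow> P \<in> Tset Term Wo Bo x"
  shows "alpha Term WWin Wo Bo P0 = x P0"
proof (rule ccontr)
  assume neq: "alpha Term WWin Wo Bo P0 \<noteq> x P0"
  define d where "d Q = x Q - alpha Term WWin Wo Bo Q" for Q
  have alx: "alpha Term WWin Wo Bo Q \<le> x Q" for Q
    using R by (auto intro!: alpha_le_super[OF G R] simp: richman_def)
  have al0: "0 \<le> alpha Term WWin Wo Bo Q" for Q
    using alpha_conv(2)[OF G R, of 0 Q] by (auto split: if_splits)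
  have dge: "0 \<le> d Q" for Q using alx[of Q] by (simp add: d_def)
  define M where "M = Max (range d)"
  have dleM: "d Q \<le> M" for Q unfolding M_def by (rule Max_ge) auto
  have Mpos: "M > 0" using dleM[of P0] dge[of P0] neq by (simp add: d_def)
  have "M \<in> range d" unfolding M_def by (rule Max_in) auto
  then obtain P1 where P1: "d P1 = M" by auto
  have "x P1 > 0" using P1 Mpos al0[of P1] by (simp add: d_def)
  with H obtain n1 where "P1 \<in> Tseq Term Wo Bo x n1" by (auto simp: Tset_def)
  then have ex: "\<exists>Q. d Q = M \<and> Q \<in> Tseq Term Wo Bo x n1" using P1 by blast
  define n where "n = (LEAST k. \<exists>Q. d Q = M \<and> Q \<in> Tseq Term Wo Bo x k)"
  obtain P where P: "d P = M" "P \<in> Tseq Term Wo Bo x n"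
    using LeastI[of "\<lambda>k. \<exists>Q. d Q = M \<and> Q \<in> Tseq Term Wo Bo x k", OF ex] unfolding n_def by blast
  have mn: "Q \<notin> Tseq Term Wo Bo x k" if "k < n" "d Q = M" for k Q
    using not_less_Least[OF that(1)[unfolded n_def]] that(2) by blast
  have dT: "d Q = 0" if "Q \<in> Term" for Q
    using alpha_Term[OF G R that] R that by (auto simp: d_def richman_def)
  have PT: "P \<notin> Term" using dT[of P] P Mpos by auto
  then have "n \<noteq> 0" using P by (cases n) auto
  then obtain k where k: "n = Suc k" by (cases n) auto
  have Pk: "P \<notin> Tseq Term Wo Bo x k" using mn[of k P] k P by auto
  have ne: "Wo P \<noteq> {}" "Bo P \<noteq> {}" using G PT by (auto simp: game_def)
  have "Min (alpha Term WWin Wo Bo ` Bo P) \<in> alpha Term WWin Wo Bo ` Bo P"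
    by (rule Min_in) (use ne in auto)
  then obtain b where b: "b \<in> Bo P" "alpha Term WWin Wo Bo b = Min (alpha Term WWin Wo Bo ` Bo P)"
    by auto
  have gen: "d w = M \<and> d b = M" if gw: "greedy_white Wo x P w" for w
  proof -
    have w: "w \<in> Wo P" "x w = Max (x ` Wo P)" using gw by (auto simp: greedy_white_def)
    have xP: "x P = (x w + Min (x ` Bo P)) / 2" using R PT w by (simp add: richman_def)
    have aP: "alpha Term WWin Wo Bo P = (Max (alpha Term WWin Wo Bo ` Wo P) + alpha Term WWin Wo Bo b) / 2"
      using alpha_rich[OF G R PT] b by simp
    have "alpha Term WWin Wo Bo w \<le> Max (alpha Term WWin Wo Bo ` Wo P)" using w by (auto intro: Max_ge)
    moreover have "Min (x ` Bo P) \<le> x b" using b by (auto intro: Min_le)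
    ultimately have "2 * d P \<le> d w + d b" using xP aP by (simp add: d_def)
    then show ?thesis using P dleM[of w] dleM[of b] by linarith
  qed
  have "Max (x ` Wo P) \<in> x ` Wo P" by (rule Max_in) (use ne in auto)
  then obtain w where w: "w \<in> Wo P" "x w = Max (x ` Wo P)" by auto
  then have gw: "greedy_white Wo x P w" by (simp add: greedy_white_def)
  have "P \<in> Tseq Term Wo Bo x (Suc k)" using P k by simp
  then have "(\<exists>Q. greedy_white Wo x P Q \<and> Q \<in> Tseq Term Wo Bo x k) \<or> Bo P \<subseteq> Tseq Term Wo Bo x k"
    using Pk by simp
  then show False
  proof
    assume "\<exists>Q. greedy_white Wo x P Q \<and> Q \<in> Tseq Term Wo Bo x k"
    then obtain Q where Q: "greedy_white Wo x P Q" "Q \<in> Tseq Term Wo Bo x k" by blast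
    have "d Q = M" using gen[OF Q(1)] by blast
    moreover have "k < n" using k by simp
    ultimately show False using mn[of k Q] Q(2) by blast
  next
    assume "Bo P \<subseteq> Tseq Term Wo Bo x k"
    then have bk: "b \<in> Tseq Term Wo Bo x k" using b(1) by blast
    have "d b = M" using gen[OF gw] by blast
    moreover have "k < n" using k by simp
    ultimately show False using mn[of k b] bk by blast
  qed
qed

lemma dir_only:
  fixes Term WWin :: "'p::finite set" and Wo Bo :: "'p \<Rightarrow> 'p set" and x :: "'p \<Rightarrow> real"
  assumes G: "game Term WWin Wo Bo" and R: "richman Term WWin Wo Bo x"
    and A: "\<forall>P. alpha Term WWin Wo Bo P = x P"
  shows "x P0 > 0 \<longrightarrow> P0 \<in> Tset Term Wo Bo x"
proof (rule ccontr)
  assume "\<not> (x P0 > 0 \<longrightarrow> P0 \<in> Tset Term Wo Bo x)"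
  then have P0: "x P0 > 0" "P0 \<notin> Tset Term Wo Bo x" by auto
  have R1: "0 \<le> x Q" for Q using R unfolding richman_def by blast
  have R2: "x Q = (if Q \<in> WWin then 1 else 0)" if "Q \<in> Term" for Q
    using R that unfolding richman_def by blast
  have R3: "x Q = (Max (x ` Wo Q) + Min (x ` Bo Q)) / 2" if "Q \<notin> Term" for Q
    using R that unfolding richman_def by blast
  define U where "U = - Tset Term Wo Bo x"
  define m where "m = Max (x ` U)"
  have xleU: "x Q \<le> m" if "Q \<in> U" for Q unfolding m_def using that by (auto intro: Max_ge)
  have "m \<in> x ` U" unfolding m_def by (rule Max_in) (use P0 U_def in auto)
  then obtain P1 where P1: "P1 \<in> U" "x P1 = m" by auto
  have mpos: "m > 0" using xleU[of P0] P0 U_def by auto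
  define E where "E = insert m ((\<lambda>Q. m - x Q) ` {Q. x Q < m})"
  define eps where "eps = Min E"
  have finE: "finite E" unfolding E_def by auto
  have epos: "eps > 0" unfolding eps_def using finE mpos by (auto simp: Min_gr_iff E_def)
  have elem: "eps \<le> m" unfolding eps_def E_def by (rule Min_le) (use finE E_def in auto)
  have gap: "x Q \<le> m - eps" if "x Q < m" for Q
  proof -
    have "eps \<le> m - x Q" unfolding eps_def by (rule Min_le) (use finE that in \<open>auto simp: E_def\<close>)
    then show ?thesis by simp
  qed
  define S where "S = {Q. Q \<in> U \<and> x Q = m}"
  define y where "y Q = (if Q \<in> S then x Q - eps else x Q)" for Q
  have yle: "y Q \<le> x Q" for Q using epos by (simp add: y_def)
  have TermT: "Q \<in> Tset Term Wo Bo x" if "Q \<in> Term" for Q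
    using that by (auto simp: Tset_def intro!: exI[of _ 0])
  have TS: "Q \<notin> S" if "Q \<in> Term" for Q using TermT[OF that] by (simp add: S_def U_def)
  have yle_m: "y Q \<le> m - eps" if "Q \<in> U" for Q
  proof (cases "x Q = m")
    case True then show ?thesis using that by (simp add: y_def S_def)
  next
    case False then have "x Q < m" using xleU[OF that] by simp
    then show ?thesis using gap[of Q] yle[of Q] by linarith
  qed
  have "alpha Term WWin Wo Bo P1 \<le> y P1"
  proof (rule alpha_le_super[OF G R, where y=y])
    fix P assume "P \<in> Term"
    then show "(if P \<in> WWin then 1 else 0) \<le> y P" using TS[of P] R2[of P] by (simp add: y_def)
  next
    fix P assume "P \<notin> Term"
    show "0 \<le> y P" using R1[of P] elem by (auto simp: y_def S_def)
  next
    fix P assume PT: "P \<notin> Term"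
    have ne: "Wo P \<noteq> {}" "Bo P \<noteq> {}" using G PT by (auto simp: game_def)
    show "(Max (y ` Wo P) + Min (y ` Bo P)) / 2 \<le> y P"
    proof (cases "P \<in> S")
      case False
      have "Max (y ` Wo P) \<le> Max (x ` Wo P)" by (rule Max_le_pt) (use ne yle in auto)
      moreover have "Min (y ` Bo P) \<le> Min (x ` Bo P)" by (rule Min_le_pt) (use ne yle in auto)
      moreover have "y P = x P" using False by (simp add: y_def)
      moreover have "x P = (Max (x ` Wo P) + Min (x ` Bo P)) / 2" by (rule R3[OF PT])
      ultimately show ?thesis by argo
    next
      case True
      then have PU: "P \<notin> Tset Term Wo Bo x" and xP: "x P = m" by (auto simp: S_def U_def)
      have gU: "Q \<in> U" if "greedy_white Wo x P Q" for Q
      proof (rule ccontr)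
        assume "Q \<notin> U"
        then obtain j where "Q \<in> Tseq Term Wo Bo x j" by (auto simp: U_def Tset_def)
        then have "P \<in> Tseq Term Wo Bo x (Suc j)" using that by auto
        then show False using PU unfolding Tset_def by blast
      qed
      have "Max (x ` Wo P) \<in> x ` Wo P" by (rule Max_in) (use ne in auto)
      then obtain w where w: "w \<in> Wo P" "x w = Max (x ` Wo P)" by auto
      have "w \<in> U" using gU w unfolding greedy_white_def by blast
      then have Mx: "Max (x ` Wo P) \<le> m" using w(2) xleU[of w] by linarith
      have "y Q \<le> m - eps" if Q: "Q \<in> Wo P" for Q
      proof (cases "x Q = m")
        case True
        have "x Q \<le> Max (x ` Wo P)" by (rule Max_ge) (use Q in auto)
        then have "x Q = Max (x ` Wo P)" using True Mx by linarith
        then have "Q \<in> U" using gU Q unfolding greedy_white_def by blast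
        then show ?thesis by (rule yle_m)
      next
        case False
        have "x Q \<le> Max (x ` Wo P)" by (rule Max_ge) (use Q in auto)
        then have "x Q < m" using False Mx by linarith
        then show ?thesis using gap[of Q] yle[of Q] by linarith
      qed
      then have My: "Max (y ` Wo P) \<le> m - eps" by (intro Max.boundedI) (use ne in auto)
      have "\<exists>b\<in>Bo P. b \<in> U"
      proof (rule ccontr)
        assume "\<not> (\<exists>b\<in>Bo P. b \<in> U)"
        then have "Bo P \<subseteq> Tset Term Wo Bo x" unfolding U_def by blast
        then obtain j where "Bo P \<subseteq> Tseq Term Wo Bo x j" using Tseq_fin_sub[OF finite] by blast
        then have "P \<in> Tseq Term Wo Bo x (Suc j)" by auto
        then show False using PU unfolding Tset_def by blast
      qed
      then obtain b where b: "b \<in> Bo P" "b \<in> U" by blast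
      have "Min (y ` Bo P) \<le> y b" using b by (auto intro: Min_le)
      then have "Min (y ` Bo P) \<le> m - eps" using yle_m[OF b(2)] by simp
      moreover have "y P = m - eps" using True xP by (simp add: y_def)
      ultimately show ?thesis using My by argo
    qed
  qed
  moreover have "y P1 = m - eps" using P1 by (simp add: y_def S_def)
  ultimately show False using A P1 epos by simp
qed

theorem proposition2:
  fixes Term WWin :: "'p::finite set" and Wo Bo :: "'p \<Rightarrow> 'p set" and x :: "'p \<Rightarrow> real"
  assumes "game Term WWin Wo Bo"
    and "richman Term WWin Wo Bo x"
  shows "(\<forall>P. alpha Term WWin Wo Bo P = x P) \<longleftrightarrow> (\<forall>P. x P > 0 \<longrightarrow> P \<in> Tset Term Wo Bo x)"
  using dir_if[OF assms] dir_only[OF assms] by blast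

end
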